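(* Let $n_d\ge 1$ and for $i=1,\dots,n_d$ let $S_i>0$, $\overline{P_i}\in(0,1]$ and $\theta_i\in[0,\pi/2]$. For $S>0$, $\overline{P}\in(0,1]$, $\theta\in[0,\pi/2]$ define $\mathcal{X}(S,\overline{P},\theta)=\{(P,Q)\in\mathbb{R}^2: 0\le P\le S\overline{P},\ Q^2\le S^2-P^2,\ |Q|\le\tan(\theta)P\}$, where for $\theta=\pi/2$ the constraint $|Q|\le\tan(\theta)P$ is omitted. Let $S_0=\min_i S_i$, $\overline{P_0}=\min_i\overline{P_i}$, $\theta_0=\min_i\theta_i$. Then $$\mathcal{X}(n_dS_0,\overline{P_0},\theta_0)\subseteq\bigoplus_{i=1}^{n_d}\mathcal{X}(S_i,\overline{P_i},\theta_i),$$ and equality holds if and only if all parameters are homogeneous, i.e. $S_i=S_0$, $\overline{P_i}=\overline{P_0}$ and $\theta_i=\theta_0$ for all $i$.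
   Context: $\oplus$ denotes the Minkowski sum $A\oplus B=\{a+b: a\in A, b\in B\}$. The set $\mathcal{X}(S,\overline{P},\theta)$ is the feasible real/reactive power set of a photovoltaic inverter with apparent power rating $S$, normalized available real power $\overline{P}$ (normalized with respect to $S$), and minimum power factor $\cos\theta$. *)

theory Defs
  imports "HOL-Analysis.Analysis"
begin

text \<open>Feasible real/reactive power set of a PV inverter with rating S, normalized
available real power Pbar and minimum power factor cos theta. For theta = pi/2 the
power factor constraint is omitted.\<close>
definition feas :: "real \<Rightarrow> real \<Rightarrow> real \<Rightarrow> (real \<times> real) set" where
  "feas S Pbar \<theta> = {(P, Q). 0 \<le> P \<and> P \<le> S * Pbar \<and> Q\<^sup>2 \<le> S\<^sup>2 - P\<^sup>2 \<and>
                          (\<theta> = pi / 2 \<or> \<bar>Q\<bar> \<le> tan \<theta> * P)}"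

definition minkowski_sum :: "nat \<Rightarrow> (nat \<Rightarrow> 'a::comm_monoid_add set) \<Rightarrow> 'a set" where
  "minkowski_sum n X = {(\<Sum>i<n. x i) | x. \<forall>i<n. x i \<in> X i}"

end

theory Submission
  imports Defs
begin

lemma tan_nonneg': "0 \<le> t \<Longrightarrow> t \<le> pi/2 \<Longrightarrow> 0 \<le> tan t"
proof (cases "t = pi/2")
  case False
  assume "0 \<le> t" "t \<le> pi/2"
  with False have "t < pi/2" by simp
  then show ?thesis using \<open>0 \<le> t\<close> by (rule tan_pos_pi2_le[rotated])
next
  case True
  have "cos t = 0" by (subst True) (rule cos_pi_half)
  then show ?thesis by (simp add: tan_def)
qed

lemma disk_iff: "(0::real) \<le> S \<Longrightarrow> (Q\<^sup>2 \<le> S\<^sup>2 - P\<^sup>2) \<longleftrightarrow> norm (P, Q) \<le> S"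
proof -
  assume S: "0 \<le> S"
  have "sqrt (P\<^sup>2 + Q\<^sup>2) \<le> S \<longleftrightarrow> P\<^sup>2 + Q\<^sup>2 \<le> S\<^sup>2"
  proof
    assume "sqrt (P\<^sup>2 + Q\<^sup>2) \<le> S" then show "P\<^sup>2 + Q\<^sup>2 \<le> S\<^sup>2" by (rule sqrt_le_D)
  next
    assume "P\<^sup>2 + Q\<^sup>2 \<le> S\<^sup>2"
    then have "sqrt (P\<^sup>2 + Q\<^sup>2) \<le> sqrt (S\<^sup>2)" by (rule real_sqrt_le_mono)
    then show "sqrt (P\<^sup>2 + Q\<^sup>2) \<le> S" using S by simp
  qed
  then show ?thesis by (simp add: norm_Pair) arith
qed

lemma feas_iff: "0 \<le> S \<Longrightarrow> (P, Q) \<in> feas S Pb t \<longleftrightarrow>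
   0 \<le> P \<and> P \<le> S * Pb \<and> norm (P, Q) \<le> S \<and> (t = pi / 2 \<or> \<bar>Q\<bar> \<le> tan t * P)"
  using disk_iff[of S Q P] by (auto simp: feas_def)

lemma sum_feas:
  fixes x :: "nat \<Rightarrow> real \<times> real"
  assumes S: "0 \<le> S" and tt: "0 \<le> t" and x: "\<forall>i<n. x i \<in> feas S Pb t"
  shows "(\<Sum>i<n. x i) \<in> feas (real n * S) Pb t"
proof -
  have xi: "0 \<le> fst (x i) \<and> fst (x i) \<le> S * Pb \<and> norm (x i) \<le> S \<and>
        (t = pi / 2 \<or> \<bar>snd (x i)\<bar> \<le> tan t * fst (x i))" if "i < n" for i
    using x that feas_iff[OF S, of "fst (x i)" "snd (x i)"] by auto
  have a: "0 \<le> (\<Sum>i<n. fst (x i))" using xi by (auto intro: sum_nonneg)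
  have b: "(\<Sum>i<n. fst (x i)) \<le> real n * S * Pb"
    using sum_bounded_above[of "{..<n}" "\<lambda>i. fst (x i)" "S * Pb"] xi by auto
  have "norm (\<Sum>i<n. x i) \<le> (\<Sum>i<n. norm (x i))" by (rule norm_sum)
  also have "\<dots> \<le> real n * S"
    using sum_bounded_above[of "{..<n}" "\<lambda>i. norm (x i)" S] xi by auto
  finally have c: "norm (\<Sum>i<n. x i) \<le> real n * S" .
  have d: "t = pi / 2 \<or> \<bar>\<Sum>i<n. snd (x i)\<bar> \<le> tan t * (\<Sum>i<n. fst (x i))"
  proof (cases "t = pi/2")
    case False
    have "\<bar>\<Sum>i<n. snd (x i)\<bar> \<le> (\<Sum>i<n. \<bar>snd (x i)\<bar>)" by (rule sum_abs)
    also have "\<dots> \<le> (\<Sum>i<n. tan t * fst (x i))"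
      by (rule sum_mono) (use xi False in auto)
    also have "\<dots> = tan t * (\<Sum>i<n. fst (x i))" by (simp add: sum_distrib_left)
    finally show ?thesis by simp
  qed simp
  have e: "(\<Sum>i<n. x i) = ((\<Sum>i<n. fst (x i)), (\<Sum>i<n. snd (x i)))"
    by (simp add: prod_eq_iff fst_sum snd_sum)
  show ?thesis
    using a b c d S e feas_iff[of "real n * S" "\<Sum>i<n. fst (x i)" "\<Sum>i<n. snd (x i)" Pb t]
    by (simp add: mult_nonneg_nonneg)
qed

lemma feas_mono:
  assumes "0 \<le> S0" "S0 \<le> S" "0 \<le> P0" "P0 \<le> Pb" "0 \<le> t0" "t0 \<le> t" "t \<le> pi/2"
  shows "feas S0 P0 t0 \<subseteq> feas S Pb t"
proof
  fix z assume z: "z \<in> feas S0 P0 t0"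
  obtain P Q where zz: "z = (P, Q)" by (cases z)
  have h: "0 \<le> P \<and> P \<le> S0 * P0 \<and> norm (P, Q) \<le> S0 \<and> (t0 = pi / 2 \<or> \<bar>Q\<bar> \<le> tan t0 * P)"
    using z zz feas_iff[OF assms(1)] by auto
  have "S0 * P0 \<le> S * Pb" using assms by (simp add: mult_mono)
  moreover have "t = pi / 2 \<or> \<bar>Q\<bar> \<le> tan t * P"
  proof (cases "t = pi/2")
    case False
    then have tl: "t < pi/2" using assms by simp
    then have "t0 \<noteq> pi/2" using assms by auto
    then have "\<bar>Q\<bar> \<le> tan t0 * P" using h by auto
    also have "\<dots> \<le> tan t * P"
      using h assms tl by (intro mult_right_mono tan_mono_le) auto
    finally show ?thesis by simp
  qed simp
  ultimately show "z \<in> feas S Pb t"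
    using h zz feas_iff[of S P Q Pb t] assms by auto
qed

theorem theorem2:
  fixes nd :: nat and S Pbar \<theta> :: "nat \<Rightarrow> real"
  assumes "nd \<ge> 1"
    and "\<And>i. i < nd \<Longrightarrow> S i > 0"
    and "\<And>i. i < nd \<Longrightarrow> 0 < Pbar i \<and> Pbar i \<le> 1"
    and "\<And>i. i < nd \<Longrightarrow> 0 \<le> \<theta> i \<and> \<theta> i \<le> pi / 2"
  defines "S0 \<equiv> Min (S ` {..<nd})"
    and "P0 \<equiv> Min (Pbar ` {..<nd})"
    and "\<theta>0 \<equiv> Min (\<theta> ` {..<nd})"
  shows "feas (real nd * S0) P0 \<theta>0 \<subseteq> minkowski_sum nd (\<lambda>i. feas (S i) (Pbar i) (\<theta> i))
       \<and> (feas (real nd * S0) P0 \<theta>0 = minkowski_sum nd (\<lambda>i. feas (S i) (Pbar i) (\<theta> i))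
          \<longleftrightarrow> (\<forall>i<nd. S i = S0 \<and> Pbar i = P0 \<and> \<theta> i = \<theta>0))"
proof -
  have fin: "finite {..<nd}" and ne: "{..<nd} \<noteq> {}"
    using assms(1) by (auto simp: lessThan_empty_iff)
  have S0le: "S0 \<le> S i" and P0le: "P0 \<le> Pbar i" and t0le: "\<theta>0 \<le> \<theta> i" if "i < nd" for i
  proof -
    have "i \<in> {..<nd}" using that by simp
    then show "S0 \<le> S i" "P0 \<le> Pbar i" "\<theta>0 \<le> \<theta> i"
      unfolding S0_def P0_def \<theta>0_def by (auto intro!: Min_le)
  qed
  have "S0 \<in> S ` {..<nd}" unfolding S0_def using fin ne by (intro Min_in) auto
  then obtain a where a: "a < nd" "S0 = S a" by auto
  have "P0 \<in> Pbar ` {..<nd}" unfolding P0_def using fin ne by (intro Min_in) auto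
  then obtain b where b: "b < nd" "P0 = Pbar b" by auto
  have "\<theta>0 \<in> \<theta> ` {..<nd}" unfolding \<theta>0_def using fin ne by (intro Min_in) auto
  then obtain c where c: "c < nd" "\<theta>0 = \<theta> c" by auto
  have S0p: "S0 > 0" using a assms(2) by auto
  have P0p: "0 < P0" "P0 \<le> 1" using b assms(3) by auto
  have t0r: "0 \<le> \<theta>0" "\<theta>0 \<le> pi/2" using c assms(4) by auto
  have sub: "feas S0 P0 \<theta>0 \<subseteq> feas (S i) (Pbar i) (\<theta> i)" if "i < nd" for i
    using feas_mono[of S0 "S i" P0 "Pbar i" \<theta>0 "\<theta> i"] S0p P0p t0r S0le P0le t0le that assms(4)
    by auto
  have ndp: "real nd > 0" using assms(1) by auto
  have incl: "feas (real nd * S0) P0 \<theta>0 \<subseteq> minkowski_sum nd (\<lambda>i. feas (S i) (Pbar i) (\<theta> i))"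
  proof
    fix z assume z: "z \<in> feas (real nd * S0) P0 \<theta>0"
    obtain P Q where zz: "z = (P, Q)" by (cases z)
    have h: "0 \<le> P \<and> P \<le> real nd * S0 * P0 \<and> norm (P, Q) \<le> real nd * S0 \<and>
       (\<theta>0 = pi / 2 \<or> \<bar>Q\<bar> \<le> tan \<theta>0 * P)"
      using z zz feas_iff[of "real nd * S0" P Q P0 \<theta>0] S0p by auto
    have yeq: "(P / real nd, Q / real nd) = (1 / real nd) *\<^sub>R (P, Q)" by simp
    have n1: "norm (P / real nd, Q / real nd) \<le> S0"
    proof -
      have "norm (P / real nd, Q / real nd) = norm (P, Q) / real nd"
        by (subst yeq, subst norm_scaleR) simp
      then show ?thesis using h ndp by (simp add: divide_le_eq mult.commute)
    qed
    have c1: "\<theta>0 = pi / 2 \<or> \<bar>Q / real nd\<bar> \<le> tan \<theta>0 * (P / real nd)"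
      using h ndp by (auto simp: divide_le_eq)
    have "(P / real nd, Q / real nd) \<in> feas S0 P0 \<theta>0"
      using feas_iff[of S0 "P / real nd" "Q / real nd" P0 \<theta>0] S0p h n1 c1 ndp
      by (auto simp: divide_le_eq mult.commute mult.left_commute)
    then have yi: "\<forall>i<nd. (P / real nd, Q / real nd) \<in> feas (S i) (Pbar i) (\<theta> i)"
      using sub by auto
    have "z = (\<Sum>i<nd. (P / real nd, Q / real nd))"
      using zz ndp by (simp add: prod_eq_iff fst_sum snd_sum)
    then show "z \<in> minkowski_sum nd (\<lambda>i. feas (S i) (Pbar i) (\<theta> i))"
      unfolding minkowski_sum_def using yi by blast
  qed
  have eq: "feas (real nd * S0) P0 \<theta>0 = minkowski_sum nd (\<lambda>i. feas (S i) (Pbar i) (\<theta> i))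
          \<longleftrightarrow> (\<forall>i<nd. S i = S0 \<and> Pbar i = P0 \<and> \<theta> i = \<theta>0)"
  proof
    assume hom: "\<forall>i<nd. S i = S0 \<and> Pbar i = P0 \<and> \<theta> i = \<theta>0"
    have "minkowski_sum nd (\<lambda>i. feas (S i) (Pbar i) (\<theta> i)) \<subseteq> feas (real nd * S0) P0 \<theta>0"
    proof
      fix z assume "z \<in> minkowski_sum nd (\<lambda>i. feas (S i) (Pbar i) (\<theta> i))"
      then obtain x where x: "z = (\<Sum>i<nd. x i)" "\<forall>i<nd. x i \<in> feas (S i) (Pbar i) (\<theta> i)"
        unfolding minkowski_sum_def by blast
      then have "\<forall>i<nd. x i \<in> feas S0 P0 \<theta>0" using hom by auto
      then show "z \<in> feas (real nd * S0) P0 \<theta>0"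
        using sum_feas[of S0 \<theta>0 nd x P0] S0p t0r x by auto
    qed
    then show "feas (real nd * S0) P0 \<theta>0 = minkowski_sum nd (\<lambda>i. feas (S i) (Pbar i) (\<theta> i))"
      using incl by auto
  next
    assume eqs: "feas (real nd * S0) P0 \<theta>0 = minkowski_sum nd (\<lambda>i. feas (S i) (Pbar i) (\<theta> i))"
    show "\<forall>i<nd. S i = S0 \<and> Pbar i = P0 \<and> \<theta> i = \<theta>0"
    proof (rule ccontr)
      assume nh: "\<not> ?thesis"
      show False
      proof (cases "\<exists>j<nd. S j \<noteq> S0 \<or> Pbar j \<noteq> P0")
        case True
        then obtain j where j: "j < nd" "S j \<noteq> S0 \<or> Pbar j \<noteq> P0" by auto
        define x where "x = (\<lambda>i. (S i * Pbar i, 0::real))"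
        have xi: "\<forall>i<nd. x i \<in> feas (S i) (Pbar i) (\<theta> i)"
        proof (intro allI impI)
          fix i assume i: "i < nd"
          have "S i * Pbar i \<le> S i" using assms(2,3)[OF i]
            by (simp add: mult_left_le)
          then show "x i \<in> feas (S i) (Pbar i) (\<theta> i)"
            using assms(2,3,4)[OF i] feas_iff[of "S i" "S i * Pbar i" 0 "Pbar i" "\<theta> i"]
              tan_nonneg'[of "\<theta> i"] unfolding x_def by (auto simp: norm_Pair)
        qed
        then have inm: "(\<Sum>i<nd. x i) \<in> feas (real nd * S0) P0 \<theta>0"
          using eqs unfolding minkowski_sum_def by blast
        have "(\<Sum>i<nd. S0 * P0) < (\<Sum>i<nd. S i * Pbar i)"
        proof (rule sum_strict_mono_ex1)
          show "\<forall>i\<in>{..<nd}. S0 * P0 \<le> S i * Pbar i"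
          proof
            fix i assume "i \<in> {..<nd}"
            then have "S0 \<le> S i" "P0 \<le> Pbar i" using S0le P0le by auto
            then show "S0 * P0 \<le> S i * Pbar i" using S0p P0p by (intro mult_mono) auto
          qed
          have "S0 * P0 < S j * Pbar j"
          proof (cases "S j \<noteq> S0")
            case True
            then have "S0 < S j" using S0le[OF j(1)] by auto
            then show ?thesis using P0le[OF j(1)] P0p S0p
              by (smt (verit, best) mult_strict_right_mono mult_left_mono)
          next
            case False
            then have "P0 < Pbar j" using j P0le[OF j(1)] by auto
            then show ?thesis using S0le[OF j(1)] P0p S0p False
              by (simp add: mult_strict_left_mono)
          qed
          then show "\<exists>a\<in>{..<nd}. S0 * P0 < S a * Pbar a" using j by auto
        qed simp
        moreover have "fst (\<Sum>i<nd. x i) = (\<Sum>i<nd. S i * Pbar i)"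
          by (simp add: fst_sum x_def)
        moreover have "fst (\<Sum>i<nd. x i) \<le> real nd * S0 * P0"
          using inm feas_iff[of "real nd * S0" "fst (\<Sum>i<nd. x i)" "snd (\<Sum>i<nd. x i)" P0 \<theta>0] S0p
          by auto
        ultimately show False by simp
      next
        case False
        then have hSP: "\<forall>i<nd. S i = S0 \<and> Pbar i = P0" by auto
        then obtain j where j: "j < nd" "\<theta> j \<noteq> \<theta>0" using nh by auto
        have tj: "\<theta>0 < \<theta> j" using j t0le[OF j(1)] by auto
        have t0l: "\<theta>0 < pi/2" using tj assms(4)[OF j(1)] by auto
        define t0 where "t0 = tan \<theta>0"
        define t1 where "t1 = (if \<theta> j = pi/2 then t0 + 1 else tan (\<theta> j))"
        have t0n: "0 \<le> t0" unfolding t0_def using tan_nonneg' t0r by auto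
        have t01: "t0 < t1" unfolding t1_def t0_def
          using tan_monotone[of \<theta>0 "\<theta> j"] tj t0r assms(4)[OF j(1)] by auto
        define p where "p = min (S0 * P0) (S0 / (1 + t1))"
        have pp: "0 < p" unfolding p_def using S0p P0p t0n t01 by auto
        have p1: "p \<le> S0 * P0" unfolding p_def by auto
        have p2: "p * (1 + t1) \<le> S0" unfolding p_def using t0n t01
          by (smt (verit, best) divide_pos_pos le_divide_eq min.cobounded2 S0p)
        have disk: "(p * t)\<^sup>2 \<le> S0\<^sup>2 - p\<^sup>2" if "0 \<le> t" "t \<le> t1" for t
        proof -
          have "p * (1 + t) \<le> S0" using p2 pp that
            by (smt (verit, best) mult_left_mono)
          then have "(p * (1 + t))\<^sup>2 \<le> S0\<^sup>2" using pp that
            by (intro power_mono) auto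
          moreover have "p\<^sup>2 + (p * t)\<^sup>2 \<le> (p * (1 + t))\<^sup>2" using pp that
            by (simp add: power2_eq_square algebra_simps)
          ultimately show ?thesis by simp
        qed
        define x where "x = (\<lambda>i. if i = j then (p, t1 * p) else (p, t0 * p))"
        have xi: "\<forall>i<nd. x i \<in> feas (S i) (Pbar i) (\<theta> i)"
        proof (intro allI impI)
          fix i assume i: "i < nd"
          show "x i \<in> feas (S i) (Pbar i) (\<theta> i)"
          proof (cases "i = j")
            case True
            have c3: "\<theta> j = pi / 2 \<or> \<bar>t1 * p\<bar> \<le> tan (\<theta> j) * p"
              using pp t01 t0n unfolding t1_def by auto
            show ?thesis using True hSP i pp p1 disk[of t1] t01 t0n c3
              unfolding x_def feas_def by (auto simp: mult.commute)
          next
            case False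
            have "(p, t0 * p) \<in> feas S0 P0 \<theta>0"
              using pp p1 disk[of t0] t01 t0n t0l unfolding feas_def t0_def
              by (auto simp: mult.commute)
            then show ?thesis using sub[OF i] False unfolding x_def by auto
          qed
        qed
        then have inm: "(\<Sum>i<nd. x i) \<in> feas (real nd * S0) P0 \<theta>0"
          using eqs unfolding minkowski_sum_def by blast
        have "(\<Sum>i<nd. t0 * p) < (\<Sum>i<nd. snd (x i))"
        proof (rule sum_strict_mono_ex1)
          show "\<forall>i\<in>{..<nd}. t0 * p \<le> snd (x i)"
            using t01 pp unfolding x_def by auto
          show "\<exists>a\<in>{..<nd}. t0 * p < snd (x a)"
            using j t01 pp unfolding x_def by (intro bexI[of _ j]) auto
        qed simp
        moreover have "fst (\<Sum>i<nd. x i) = real nd * p"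
        proof -
          have "fst (\<Sum>i<nd. x i) = (\<Sum>i<nd. p)"
            unfolding fst_sum by (rule sum.cong) (auto simp: x_def)
          then show ?thesis by simp
        qed
        moreover have "\<bar>snd (\<Sum>i<nd. x i)\<bar> \<le> t0 * fst (\<Sum>i<nd. x i)"
          using inm feas_iff[of "real nd * S0" "fst (\<Sum>i<nd. x i)" "snd (\<Sum>i<nd. x i)" P0 \<theta>0]
            S0p t0l unfolding t0_def by auto
        ultimately show False by (simp add: snd_sum algebra_simps)
      qed
    qed
  qed
  show ?thesis using incl eq by blast
qed

end
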